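(* Let $E_1,\dots,E_{k+1}$ be a $\mathbb{Q}$-nef partition of a complete fan $\Sigma$ and $V=\{v_1,\dots,v_k\}$ an amenable collection of vectors subordinate to it. Then the monomials of the Laurent polynomial $\phi_V^*w$ correspond (as points of $M\cap M_V$) exactly to all possible sums $p+\sum_{s=1}^\ell u_s$ with $p\in E_{k+1}$ and $u_1,\dots,u_\ell\in E_1\cup\dots\cup E_k$ (repetitions allowed, $\ell\ge0$) such that $\langle v_i,p+\sum_{s=1}^\ell u_s\rangle=0$ for all $1\le i\le k$.
   Context: $M$ lattice of rank $n$, $N=\mathrm{Hom}(M,\mathbb{Z})$; $\Sigma$ complete fan in $M_\mathbb{R}$, $\Sigma[1]$ primitive ray generators. $\mathbb{Q}$-nef partition: ordered partition $\Sigma[1]=E_1\sqcup\dots\sqcup E_{k+1}$ with convex rational $\Sigma$-piecewise linear functions $\varphi_i$, $\varphi_i(\rho)=\delta_{ij}$ on $E_j$. Amenable collection: $\langle v_i,\rho\rangle=-1$ on $E_i$, $\ge0$ on $E_j$ for $i<j\le k+1$, $=0$ on $E_j$ for $j<i$. $M_V=\{u\in M_\mathbb{R}:\langle v_i,u\rangle=0\ \forall i\}$. Fix $a_\rho\in\mathbb{C}^\times$, extend $V$ to a basis $v_1,\dots,v_n$ of $N$, coordinates $x_j$ on $(\mathbb{C}^\times)^n$ with $x^\rho=\prod_jx_j^{\langle v_j,\rho\rangle}$. $X^\vee:\ \sum_{\rho\in E_i}a_\rho x^\rho=1$ ($1\le i\le k$), $w=\sum_{\rho\in E_{k+1}}a_\rho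 x^\rho$. Recursively $f_i=\sum_{\rho\in E_i}a_\rho\prod_{j<i}f_j^{\langle v_j,\rho\rangle}\prod_{j>k}x_j^{\langle v_j,\rho\rangle}$, and $\phi_V(x_{k+1},\dots,x_n)=(f_1,\dots,f_k,x_{k+1},\dots,x_n)$. A monomial $\prod_{j>k}x_j^{m_j}$ corresponds to the unique $u\in M\cap M_V$ with $\langle v_j,u\rangle=m_j$ for $j>k$. *)

theory Defs
  imports "HOL-Analysis.Analysis" "HOL-Library.Poly_Mapping"
begin

section \<open>Lattice M = Z^n inside M_R = R^n, dual lattice N = Z^n, pairing = inner product\<close>

definition lattice_pt :: "real^'n \<Rightarrow> bool" where
  "lattice_pt x \<longleftrightarrow> (\<forall>i. x $ i \<in> \<int>)"

definition pair :: "real^'n \<Rightarrow> real^'n \<Rightarrow> int" where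
  "pair v u = \<lfloor>v \<bullet> u\<rfloor>"

definition zbasis :: "(nat \<Rightarrow> real^'n) \<Rightarrow> bool" where
  "zbasis v \<longleftrightarrow> (\<forall>j\<in>{1..CARD('n)}. lattice_pt (v j)) \<and>
     (\<forall>w. lattice_pt w \<longrightarrow>
        (\<exists>!c::nat \<Rightarrow> int. (\<forall>j. j \<notin> {1..CARD('n)} \<longrightarrow> c j = 0) \<and>
             w = (\<Sum>j\<in>{1..CARD('n)}. of_int (c j) *\<^sub>R v j)))"

definition pcone :: "(real^'n) set \<Rightarrow> (real^'n) set" where
  "pcone G = {x. \<exists>c. (\<forall>g\<in>G. c g \<ge> 0) \<and> x = (\<Sum>g\<in>G. c g *\<^sub>R g)}"

definition rat_sc_cone :: "(real^'n) set \<Rightarrow> bool" where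
  "rat_sc_cone \<sigma> \<longleftrightarrow> (\<exists>G. finite G \<and> (\<forall>g\<in>G. lattice_pt g) \<and> \<sigma> = pcone G) \<and>
     (\<forall>x. x \<in> \<sigma> \<and> - x \<in> \<sigma> \<longrightarrow> x = 0)"

definition fan :: "(real^'n) set set \<Rightarrow> bool" where
  "fan \<Sigma> \<longleftrightarrow> finite \<Sigma> \<and> (\<forall>\<sigma>\<in>\<Sigma>. rat_sc_cone \<sigma>) \<and>
     (\<forall>\<sigma>\<in>\<Sigma>. \<forall>F. F face_of \<sigma> \<and> F \<noteq> {} \<longrightarrow> F \<in> \<Sigma>) \<and>
     (\<forall>\<sigma>\<in>\<Sigma>. \<forall>\<tau>\<in>\<Sigma>. (\<sigma> \<inter> \<tau>) face_of \<sigma> \<and> (\<sigma> \<inter> \<tau>) face_of \<tau>)"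

definition complete_fan :: "(real^'n) set set \<Rightarrow> bool" where
  "complete_fan \<Sigma> \<longleftrightarrow> fan \<Sigma> \<and> \<Union>\<Sigma> = UNIV"

definition primitive :: "real^'n \<Rightarrow> bool" where
  "primitive \<rho> \<longleftrightarrow> lattice_pt \<rho> \<and> \<rho> \<noteq> 0 \<and> (\<forall>t::real. 0 < t \<and> t < 1 \<longrightarrow> \<not> lattice_pt (t *\<^sub>R \<rho>))"

definition rays :: "(real^'n) set set \<Rightarrow> (real^'n) set" where
  "rays \<Sigma> = {\<rho>. primitive \<rho> \<and> pcone {\<rho>} \<in> \<Sigma>}"

definition sigma_pl_rational :: "(real^'n) set set \<Rightarrow> (real^'n \<Rightarrow> real) \<Rightarrow> bool" where
  "sigma_pl_rational \<Sigma> \<phi> \<longleftrightarrow>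
     (\<forall>\<sigma>\<in>\<Sigma>. \<exists>m::real^'n. (\<forall>i. m $ i \<in> \<rat>) \<and> (\<forall>x\<in>\<sigma>. \<phi> x = m \<bullet> x))"

definition Qnef_partition :: "(real^'n) set set \<Rightarrow> nat \<Rightarrow> (nat \<Rightarrow> (real^'n) set) \<Rightarrow> bool" where
  "Qnef_partition \<Sigma> k E \<longleftrightarrow>
     (\<forall>i\<in>{1..k+1}. E i \<noteq> {}) \<and>
     (\<forall>i\<in>{1..k+1}. \<forall>j\<in>{1..k+1}. i \<noteq> j \<longrightarrow> E i \<inter> E j = {}) \<and>
     (\<Union>i\<in>{1..k+1}. E i) = rays \<Sigma> \<and>
     (\<forall>i\<in>{1..k+1}. \<exists>\<phi>. convex_on UNIV \<phi> \<and> sigma_pl_rational \<Sigma> \<phi> \<and>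
         (\<forall>j\<in>{1..k+1}. \<forall>\<rho>\<in>E j. \<phi> \<rho> = (if i = j then 1 else 0)))"

definition amenable :: "nat \<Rightarrow> (nat \<Rightarrow> (real^'n) set) \<Rightarrow> (nat \<Rightarrow> real^'n) \<Rightarrow> bool" where
  "amenable k E v \<longleftrightarrow>
     (\<forall>i\<in>{1..k}. lattice_pt (v i) \<and>
        (\<forall>\<rho>\<in>E i. pair (v i) \<rho> = -1) \<and>
        (\<forall>j. i < j \<and> j \<le> k+1 \<longrightarrow> (\<forall>\<rho>\<in>E j. pair (v i) \<rho> \<ge> 0)) \<and>
        (\<forall>j. 1 \<le> j \<and> j < i \<longrightarrow> (\<forall>\<rho>\<in>E j. pair (v i) \<rho> = 0)))"

text \<open>Coefficients: complex polynomials in formal indeterminates a_rho (one per ray).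
  Laurent monomials in x_{k+1},...,x_n: exponent vectors (m_j) with m_j = 0 unless k<j<=n.\<close>
type_synonym 'n coef = "((real^'n) \<Rightarrow>\<^sub>0 nat) \<Rightarrow>\<^sub>0 complex"
type_synonym 'n laurent = "(nat \<Rightarrow>\<^sub>0 int) \<Rightarrow>\<^sub>0 'n coef"

definition avar :: "real^'n \<Rightarrow> 'n laurent" where
  "avar \<rho> = Poly_Mapping.single 0 (Poly_Mapping.single (Poly_Mapping.single \<rho> 1) 1)"

definition xmono :: "(nat \<Rightarrow>\<^sub>0 int) \<Rightarrow> 'n laurent" where
  "xmono m = Poly_Mapping.single m 1"

text \<open>exponent vector of prod_{j>k} x_j^{<v_j,u>}\<close>
definition tail_exp :: "nat \<Rightarrow> (nat \<Rightarrow> real^'n) \<Rightarrow> real^'n \<Rightarrow> (nat \<Rightarrow>\<^sub>0 int)" where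
  "tail_exp k v u = (\<Sum>j\<in>{k<..CARD('n)}. Poly_Mapping.single j (pair (v j) u))"

definition fstep :: "nat \<Rightarrow> (nat \<Rightarrow> (real^'n) set) \<Rightarrow> (nat \<Rightarrow> real^'n) \<Rightarrow> (nat \<Rightarrow> 'n laurent) \<Rightarrow> nat \<Rightarrow> 'n laurent" where
  "fstep k E v g i = (\<Sum>\<rho>\<in>E i. avar \<rho> * (\<Prod>j\<in>{1..<i}. g j ^ nat (pair (v j) \<rho>)) * xmono (tail_exp k v \<rho>))"

primrec fpre :: "nat \<Rightarrow> (nat \<Rightarrow> (real^'n) set) \<Rightarrow> (nat \<Rightarrow> real^'n) \<Rightarrow> nat \<Rightarrow> (nat \<Rightarrow> 'n laurent)" where
  "fpre k E v 0 = (\<lambda>j. 0)"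
| "fpre k E v (Suc i) = (fpre k E v i)(Suc i := fstep k E v (fpre k E v i) (Suc i))"

definition ff :: "nat \<Rightarrow> (nat \<Rightarrow> (real^'n) set) \<Rightarrow> (nat \<Rightarrow> real^'n) \<Rightarrow> nat \<Rightarrow> 'n laurent" where
  "ff k E v i = fpre k E v i i"

definition pullback_w :: "nat \<Rightarrow> (nat \<Rightarrow> (real^'n) set) \<Rightarrow> (nat \<Rightarrow> real^'n) \<Rightarrow> 'n laurent" where
  "pullback_w k E v = (\<Sum>\<rho>\<in>E (k+1). avar \<rho> * (\<Prod>j\<in>{1..k}. ff k E v j ^ nat (pair (v j) \<rho>))
                          * xmono (tail_exp k v \<rho>))"

end

theory Submission
  imports Defs
begin


lemma pm_expand: "(f::'a \<Rightarrow>\<^sub>0 'b::comm_monoid_add) = (\<Sum>a\<in>Poly_Mapping.keys f. Poly_Mapping.single a (Poly_Mapping.lookup f a))"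
proof (rule poly_mapping_eqI)
  fix k
  show "Poly_Mapping.lookup f k = Poly_Mapping.lookup (\<Sum>a\<in>Poly_Mapping.keys f. Poly_Mapping.single a (Poly_Mapping.lookup f a)) k"
    by (simp add: lookup_sum lookup_single when_def in_keys_iff)
qed

lemma lookup_mult_fin:
  fixes f g :: "'a::comm_monoid_add \<Rightarrow>\<^sub>0 'b::comm_semiring_0"
  shows "Poly_Mapping.lookup (f * g) k = (\<Sum>p\<in>Poly_Mapping.keys f \<times> Poly_Mapping.keys g. if fst p + snd p = k then Poly_Mapping.lookup f (fst p) * Poly_Mapping.lookup g (snd p) else 0)"
proof -
  have "f * g = (\<Sum>a\<in>Poly_Mapping.keys f. Poly_Mapping.single a (Poly_Mapping.lookup f a)) * (\<Sum>b\<in>Poly_Mapping.keys g. Poly_Mapping.single b (Poly_Mapping.lookup g b))"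
    using pm_expand[of f] pm_expand[of g] by simp
  also have "\<dots> = (\<Sum>a\<in>Poly_Mapping.keys f. \<Sum>b\<in>Poly_Mapping.keys g. Poly_Mapping.single (a+b) (Poly_Mapping.lookup f a * Poly_Mapping.lookup g b))"
    unfolding sum_distrib_right by (simp add: sum_distrib_left mult_single)
  finally have "Poly_Mapping.lookup (f*g) k = (\<Sum>a\<in>Poly_Mapping.keys f. \<Sum>b\<in>Poly_Mapping.keys g. if a + b = k then Poly_Mapping.lookup f a * Poly_Mapping.lookup g b else 0)"
    by (simp add: lookup_sum lookup_single when_def)
  also have "\<dots> = (\<Sum>p\<in>Poly_Mapping.keys f \<times> Poly_Mapping.keys g. if fst p + snd p = k then Poly_Mapping.lookup f (fst p) * Poly_Mapping.lookup g (snd p) else 0)"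
    by (simp add: sum.cartesian_product split_def)
  finally show ?thesis .
qed

definition goodP :: "('a::comm_semiring_1 \<Rightarrow> bool) \<Rightarrow> bool" where
 "goodP P \<longleftrightarrow> P 0 \<and> P 1 \<and> (\<forall>x y. P x \<longrightarrow> P y \<longrightarrow> P (x+y)) \<and> (\<forall>x y. P x \<longrightarrow> P y \<longrightarrow> P (x*y))
   \<and> (\<forall>x y. P x \<longrightarrow> P y \<longrightarrow> x+y=0 \<longrightarrow> x=0) \<and> (\<forall>x y. P x \<longrightarrow> P y \<longrightarrow> x\<noteq>0 \<longrightarrow> y\<noteq>0 \<longrightarrow> x*y\<noteq>0)"

definition liftP :: "('b::comm_semiring_1 \<Rightarrow> bool) \<Rightarrow> ('a \<Rightarrow>\<^sub>0 'b) \<Rightarrow> bool" where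
  "liftP P f \<longleftrightarrow> (\<forall>k. P (Poly_Mapping.lookup f k))"

lemma goodP_p1: "goodP P \<Longrightarrow> P 0" unfolding goodP_def by (elim conjE)
lemma goodP_p2: "goodP P \<Longrightarrow> P 1" unfolding goodP_def by (elim conjE)
lemma goodP_p3: "goodP P \<Longrightarrow> \<forall>x y. P x \<longrightarrow> P y \<longrightarrow> P (x+y)" unfolding goodP_def by (elim conjE)
lemma goodP_p4: "goodP P \<Longrightarrow> \<forall>x y. P x \<longrightarrow> P y \<longrightarrow> P (x*y)" unfolding goodP_def by (elim conjE)
lemma goodP_p5: "goodP P \<Longrightarrow> \<forall>x y. P x \<longrightarrow> P y \<longrightarrow> x+y=0 \<longrightarrow> x=0" unfolding goodP_def by (elim conjE)
lemma goodP_p6: "goodP P \<Longrightarrow> \<forall>x y. P x \<longrightarrow> P y \<longrightarrow> x\<noteq>0 \<longrightarrow> y\<noteq>0 \<longrightarrow> x*y\<noteq>0" unfolding goodP_def by (elim conjE)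

lemma goodP_0: "goodP P \<Longrightarrow> P 0" by (rule goodP_p1)
lemma goodP_1: "goodP P \<Longrightarrow> P 1" by (rule goodP_p2)
lemma goodP_add: assumes "goodP P" "P x" "P y" shows "P (x+y)" using goodP_p3[OF assms(1), rule_format, OF assms(2-)] .
lemma goodP_mul: assumes "goodP P" "P x" "P y" shows "P (x*y)" using goodP_p4[OF assms(1), rule_format, OF assms(2-)] .
lemma goodP_z: assumes "goodP P" "P x" "P y" "x+y=0" shows "x=0" using goodP_p5[OF assms(1), rule_format, OF assms(2-)] .
lemma goodP_nz: assumes "goodP P" "P x" "P y" "x\<noteq>0" "y\<noteq>0" shows "x*y\<noteq>0" using goodP_p6[OF assms(1), rule_format, OF assms(2-)] .

lemma goodP_sum: assumes g: "goodP P" shows "(\<forall>x\<in>A. P (f x)) \<Longrightarrow> P (sum f A)"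
proof (induction A rule: infinite_finite_induct)
  case (infinite A) thus ?case using goodP_0[OF g] by simp
next
  case empty thus ?case using goodP_0[OF g] by simp
next
  case (insert x F)
  have 1: "P (f x)" using insert.prems by blast
  have 2: "P (sum f F)" using insert.IH insert.prems by blast
  have "sum f (insert x F) = f x + sum f F" using insert.hyps by simp
  thus ?case using goodP_add[OF g 1 2] by simp
qed

lemma goodP_sum0: assumes "goodP P" "finite A" "\<forall>x\<in>A. P (f x)" "sum f A = 0" "a \<in> A"
  shows "f a = 0"
proof -
  have e: "f a + sum f (A - {a}) = 0" using sum.remove[OF assms(2,5), of f] assms(4) by simp
  have p1: "P (sum f (A - {a}))" by (rule goodP_sum[OF assms(1)]) (use assms(3) in blast)
  have p2: "P (f a)" using assms(3,5) by blast
  show ?thesis by (rule goodP_z[OF assms(1) p2 p1 e])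
qed

lemma lift_good:
  fixes P :: "'b::comm_semiring_1 \<Rightarrow> bool"
  assumes g: "goodP P"
  shows "goodP (liftP P :: ('a::comm_monoid_add \<Rightarrow>\<^sub>0 'b) \<Rightarrow> bool)"
proof -
  note P0 = goodP_0[OF g] and P1 = goodP_1[OF g] and Padd = goodP_add[OF g] and Pmul = goodP_mul[OF g]
    and Pz = goodP_z[OF g] and Pnz = goodP_nz[OF g]
  have mul: "liftP P (f*g)" if "liftP P f" "liftP P g" for f g :: "'a \<Rightarrow>\<^sub>0 'b"
    unfolding liftP_def lookup_mult_fin
    by (intro allI goodP_sum[OF g]) (use that P0 Pmul in \<open>auto simp: liftP_def\<close>)
  have nz: "f*g \<noteq> 0" if "liftP P f" "liftP P g" "f \<noteq> 0" "g \<noteq> 0" for f g :: "'a \<Rightarrow>\<^sub>0 'b"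
  proof
    assume fg: "f * g = 0"
    have "Poly_Mapping.keys f \<noteq> {}" using that(3) by simp
    then obtain a where a: "a \<in> Poly_Mapping.keys f" by blast
    have "Poly_Mapping.keys g \<noteq> {}" using that(4) by simp
    then obtain b where b: "b \<in> Poly_Mapping.keys g" by blast
    have s0: "(\<Sum>p\<in>Poly_Mapping.keys f \<times> Poly_Mapping.keys g. if fst p + snd p = a+b then Poly_Mapping.lookup f (fst p) * Poly_Mapping.lookup g (snd p) else 0) = 0"
      using fg lookup_mult_fin[of f g "a+b"] by simp
    have allP: "\<forall>p\<in>Poly_Mapping.keys f \<times> Poly_Mapping.keys g. P (if fst p + snd p = a+b then Poly_Mapping.lookup f (fst p) * Poly_Mapping.lookup g (snd p) else 0)"
      using that(1,2) P0 Pmul unfolding liftP_def by simp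
    have "(\<lambda>p. if fst p + snd p = a+b then Poly_Mapping.lookup f (fst p) * Poly_Mapping.lookup g (snd p) else 0) (a,b) = 0"
      by (rule goodP_sum0[OF g _ allP s0]) (use a b in simp_all)
    hence "Poly_Mapping.lookup f a * Poly_Mapping.lookup g b = 0" by simp
    moreover have "Poly_Mapping.lookup f a * Poly_Mapping.lookup g b \<noteq> 0"
      apply (rule Pnz) using that(1,2) a b by (simp_all add: liftP_def in_keys_iff)
    ultimately show False by simp
  qed
  have z: "f = 0" if "liftP P f" "liftP P g" "f + g = 0" for f g :: "'a \<Rightarrow>\<^sub>0 'b"
  proof (rule poly_mapping_eqI)
    fix k
    have "Poly_Mapping.lookup (f+g) k = 0" using that(3) by simp
    hence "Poly_Mapping.lookup f k + Poly_Mapping.lookup g k = 0" by (simp add: lookup_add)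
    hence "Poly_Mapping.lookup f k = 0"
      by (rule Pz[rotated 2]) (use that(1,2) in \<open>simp_all add: liftP_def\<close>)
    thus "Poly_Mapping.lookup f k = Poly_Mapping.lookup 0 k" by simp
  qed
  have a: "liftP P (f+g)" if "liftP P f" "liftP P g" for f g :: "'a \<Rightarrow>\<^sub>0 'b"
    using that Padd by (simp add: liftP_def lookup_add)
  have o: "liftP P (1 :: 'a \<Rightarrow>\<^sub>0 'b)" using P0 P1 by (simp add: liftP_def lookup_one when_def)
  have zz: "liftP P (0 :: 'a \<Rightarrow>\<^sub>0 'b)" using P0 by (simp add: liftP_def)
  show ?thesis unfolding goodP_def
    apply (intro conjI allI impI)
         apply (rule zz)
        apply (rule o)
       apply (erule (1) a)
      apply (erule (1) mul)
     apply (erule (2) z)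
    by (erule (3) nz)
qed


definition splus :: "'a::plus set \<Rightarrow> 'a set \<Rightarrow> 'a set" where
  "splus A B = {a + b | a b. a \<in> A \<and> b \<in> B}"

primrec spow :: "'a::monoid_add set \<Rightarrow> nat \<Rightarrow> 'a set" where
  "spow A 0 = {0}"
| "spow A (Suc n) = splus A (spow A n)"

primrec Fw :: "(nat \<Rightarrow> 'a::monoid_add set) \<Rightarrow> nat \<Rightarrow> (nat \<Rightarrow> nat) \<Rightarrow> 'a set" where
  "Fw R 0 d = {0}"
| "Fw R (Suc m) d = splus (Fw R m d) (spow (R (Suc m)) (d (Suc m)))"

lemma liftP_add:
  fixes f g :: "'a::comm_monoid_add \<Rightarrow>\<^sub>0 'b::comm_semiring_1"
  assumes "goodP Q" "liftP Q f" "liftP Q g" shows "liftP Q (f + g)"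
  by (rule goodP_add[OF lift_good[OF assms(1)] assms(2,3)])
lemma liftP_mult:
  fixes f g :: "'a::comm_monoid_add \<Rightarrow>\<^sub>0 'b::comm_semiring_1"
  assumes "goodP Q" "liftP Q f" "liftP Q g" shows "liftP Q (f * g)"
  by (rule goodP_mul[OF lift_good[OF assms(1)] assms(2,3)])
lemma liftP_one: assumes "goodP Q" shows "liftP Q (1 :: 'a::comm_monoid_add \<Rightarrow>\<^sub>0 'b::comm_semiring_1)"
  by (rule goodP_1[OF lift_good[OF assms(1)]])

lemma keys_add_pos:
  fixes f g :: "'a::comm_monoid_add \<Rightarrow>\<^sub>0 'b::comm_semiring_1"
  assumes g: "goodP Q" and f1: "liftP Q f" and g1: "liftP Q g"
  shows "Poly_Mapping.keys (f + g) = Poly_Mapping.keys f \<union> Poly_Mapping.keys g"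
proof (rule set_eqI)
  fix k
  have qf: "Q (Poly_Mapping.lookup f k)" and qg: "Q (Poly_Mapping.lookup g k)" using f1 g1 by (auto simp: liftP_def)
  have "Poly_Mapping.lookup f k + Poly_Mapping.lookup g k = 0 \<longleftrightarrow> Poly_Mapping.lookup f k = 0 \<and> Poly_Mapping.lookup g k = 0"
  proof
    assume e: "Poly_Mapping.lookup f k + Poly_Mapping.lookup g k = 0"
    have e2: "Poly_Mapping.lookup g k + Poly_Mapping.lookup f k = 0" using e by (simp add: add.commute)
    have "Poly_Mapping.lookup f k = 0" by (rule goodP_z[OF g qf qg e])
    moreover have "Poly_Mapping.lookup g k = 0" by (rule goodP_z[OF g qg qf e2])
    ultimately show "Poly_Mapping.lookup f k = 0 \<and> Poly_Mapping.lookup g k = 0" by simp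
  qed simp
  thus "k \<in> Poly_Mapping.keys (f + g) \<longleftrightarrow> k \<in> Poly_Mapping.keys f \<union> Poly_Mapping.keys g"
    by (auto simp: in_keys_iff lookup_add)
qed

lemma lookup_mult_nz:
  fixes f g :: "'a::comm_monoid_add \<Rightarrow>\<^sub>0 'b::comm_semiring_1"
  assumes g: "goodP P" and that: "liftP P f" "liftP P g" and a: "a \<in> Poly_Mapping.keys f" and b: "b \<in> Poly_Mapping.keys g"
  shows "Poly_Mapping.lookup (f*g) (a+b) \<noteq> 0"
proof
  assume fg: "Poly_Mapping.lookup (f*g) (a+b) = 0"
  note P0 = goodP_0[OF g] and Pmul = goodP_mul[OF g]
  have s0: "(\<Sum>p\<in>Poly_Mapping.keys f \<times> Poly_Mapping.keys g. if fst p + snd p = a+b then Poly_Mapping.lookup f (fst p) * Poly_Mapping.lookup g (snd p) else 0) = 0"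
    using fg lookup_mult_fin[of f g "a+b"] by simp
  have allP: "\<forall>p\<in>Poly_Mapping.keys f \<times> Poly_Mapping.keys g. P (if fst p + snd p = a+b then Poly_Mapping.lookup f (fst p) * Poly_Mapping.lookup g (snd p) else 0)"
    using that(1,2) P0 Pmul unfolding liftP_def by simp
  have "(\<lambda>p. if fst p + snd p = a+b then Poly_Mapping.lookup f (fst p) * Poly_Mapping.lookup g (snd p) else 0) (a,b) = 0"
    by (rule goodP_sum0[OF g _ allP s0]) (use a b in simp_all)
  hence "Poly_Mapping.lookup f a * Poly_Mapping.lookup g b = 0" by simp
  moreover have "Poly_Mapping.lookup f a * Poly_Mapping.lookup g b \<noteq> 0"
    apply (rule goodP_nz[OF g]) using that(1,2) a b by (simp_all add: liftP_def in_keys_iff)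
  ultimately show False by simp
qed

lemma keys_mult_pos:
  fixes f g :: "'a::comm_monoid_add \<Rightarrow>\<^sub>0 'b::comm_semiring_1"
  assumes g: "goodP Q" and f1: "liftP Q f" and g1: "liftP Q g"
  shows "Poly_Mapping.keys (f * g) = splus (Poly_Mapping.keys f) (Poly_Mapping.keys g)"
proof
  show "Poly_Mapping.keys (f * g) \<subseteq> splus (Poly_Mapping.keys f) (Poly_Mapping.keys g)"
    using keys_mult[of f g] by (simp add: splus_def)
  show "splus (Poly_Mapping.keys f) (Poly_Mapping.keys g) \<subseteq> Poly_Mapping.keys (f * g)"
    using lookup_mult_nz[OF g f1 g1] by (auto simp: splus_def in_keys_iff)
qed

lemma liftP_sum: fixes F :: "'c \<Rightarrow> ('a::comm_monoid_add \<Rightarrow>\<^sub>0 'b::comm_semiring_1)" assumes "goodP Q" "\<forall>x\<in>A. liftP Q (F x)" shows "liftP Q (sum F A)"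
  using goodP_sum[OF lift_good[OF assms(1)] assms(2)] .

lemma keys_sum_pos:
  fixes F :: "'c \<Rightarrow> ('a::comm_monoid_add \<Rightarrow>\<^sub>0 'b::comm_semiring_1)"
  assumes g: "goodP Q" and fin: "finite A"
  shows "(\<forall>x\<in>A. liftP Q (F x)) \<Longrightarrow> Poly_Mapping.keys (sum F A) = (\<Union>x\<in>A. Poly_Mapping.keys (F x))"
  using fin
proof (induction A rule: finite_induct)
  case empty thus ?case by simp
next
  case (insert x A)
  have "Poly_Mapping.keys (sum F (insert x A)) = Poly_Mapping.keys (F x + sum F A)" using insert.hyps by simp
  also have "\<dots> = Poly_Mapping.keys (F x) \<union> Poly_Mapping.keys (sum F A)"
    by (rule keys_add_pos[OF g]) (use insert.prems liftP_sum[OF g, of A F] in auto)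
  also have "\<dots> = Poly_Mapping.keys (F x) \<union> (\<Union>x\<in>A. Poly_Mapping.keys (F x))"
    using insert.IH insert.prems by simp
  finally show ?case by simp
qed

lemma keys_power_pos:
  fixes f :: "'a::comm_monoid_add \<Rightarrow>\<^sub>0 'b::comm_semiring_1"
  assumes g: "goodP Q" and f1: "liftP Q f"
  shows "liftP Q (f ^ n) \<and> Poly_Mapping.keys (f ^ n) = spow (Poly_Mapping.keys f) n"
proof (induction n)
  case 0 thus ?case using liftP_one[OF g] by simp
next
  case (Suc n)
  have l: "liftP Q (f^n)" using Suc by blast
  have "liftP Q (f * f^n)" by (rule liftP_mult[OF g f1 l])
  moreover have "Poly_Mapping.keys (f * f^n) = splus (Poly_Mapping.keys f) (spow (Poly_Mapping.keys f) n)"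
    using keys_mult_pos[OF g f1 l] Suc by simp
  ultimately show ?case by simp
qed

lemma keys_prod_Fw:
  fixes G :: "nat \<Rightarrow> ('a::comm_monoid_add \<Rightarrow>\<^sub>0 'b::comm_semiring_1)"
  assumes g: "goodP Q"
  shows "(\<forall>j\<in>{1..m}. liftP Q (G j)) \<Longrightarrow> liftP Q (\<Prod>j\<in>{1..m}. G j ^ d j) \<and>
     Poly_Mapping.keys (\<Prod>j\<in>{1..m}. G j ^ d j) = Fw (\<lambda>j. Poly_Mapping.keys (G j)) m d"
proof (induction m)
  case 0 thus ?case using liftP_one[OF g] by simp
next
  case (Suc m)
  have e: "(\<Prod>j\<in>{1..Suc m}. G j ^ d j) = (\<Prod>j\<in>{1..m}. G j ^ d j) * G (Suc m) ^ d (Suc m)"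
    by (simp add: prod.nat_ivl_Suc' mult.commute)
  have ih: "liftP Q (\<Prod>j\<in>{1..m}. G j ^ d j) \<and>
     Poly_Mapping.keys (\<Prod>j\<in>{1..m}. G j ^ d j) = Fw (\<lambda>j. Poly_Mapping.keys (G j)) m d"
    using Suc by auto
  have gs: "liftP Q (G (Suc m))" using Suc.prems by auto
  note pw = keys_power_pos[OF g gs, of "d (Suc m)"]
  have l1: "liftP Q (\<Prod>j\<in>{1..m}. G j ^ d j)" using ih by blast
  have l2: "liftP Q (G (Suc m) ^ d (Suc m))" using pw by blast
  show ?case unfolding e using liftP_mult[OF g l1 l2] keys_mult_pos[OF g l1 l2] ih pw by simp
qed



lemma splus_assoc: "splus (splus A B) C = splus A (splus B (C::'a::semigroup_add set))"
  unfolding splus_def by (auto simp: add.assoc) (metis add.assoc)+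

lemma splus_comm: "splus A (B::'a::ab_semigroup_add set) = splus B A"
  unfolding splus_def by (auto; metis add.commute)

lemma splus_0: "splus {0} (A::'a::monoid_add set) = A"
  unfolding splus_def by auto

lemma splus_lc: "splus A (splus B C) = splus B (splus A (C::'a::ab_semigroup_add set))"
  by (metis splus_assoc splus_comm)

lemma spow_add: "spow A (a + b) = splus (spow A a) (spow (A::'a::comm_monoid_add set) b)"
  by (induction a) (simp_all add: splus_0 splus_assoc)

lemma Fw_add: "Fw R m (\<lambda>l. d l + e l) = splus (Fw R m d) (Fw (R :: nat \<Rightarrow> 'a::comm_monoid_add set) m e)"
proof (induction m)
  case 0 thus ?case by (simp add: splus_def)
next
  case (Suc m)
  show ?case by (simp add: Suc spow_add splus_assoc splus_lc)
qed

lemma Fw_cong: "(\<And>j. 1 \<le> j \<Longrightarrow> j \<le> m \<Longrightarrow> R j = R' j) \<Longrightarrow> Fw R m d = Fw R' m d"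
  by (induction m) auto

lemma hom_splus:
  assumes h: "\<And>x y. x \<in> L \<Longrightarrow> y \<in> L \<Longrightarrow> h (x + y) = h x + h y"
  and "A \<subseteq> L" "B \<subseteq> L"
  shows "h ` splus A B = splus (h ` A) (h ` B)"
  using assms unfolding splus_def by (auto simp: image_iff) (metis subsetD)+

lemma closed_splus: "(\<And>x y. x \<in> L \<Longrightarrow> y \<in> L \<Longrightarrow> x + y \<in> L) \<Longrightarrow> A \<subseteq> L \<Longrightarrow> B \<subseteq> L \<Longrightarrow> splus A B \<subseteq> L"
  unfolding splus_def by auto

lemma hom_spow:
  assumes h: "\<And>x y. x \<in> L \<Longrightarrow> y \<in> L \<Longrightarrow> h (x + y) = h x + h y" and h0: "h 0 = 0"
  and c: "\<And>x y. x \<in> L \<Longrightarrow> y \<in> L \<Longrightarrow> x + y \<in> L" and c0: "0 \<in> L"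
  and A: "A \<subseteq> L"
  shows "spow A n \<subseteq> L \<and> h ` spow A n = spow (h ` A) n"
proof (induction n)
  case 0 thus ?case using h0 c0 by simp
next
  case (Suc n)
  thus ?case using closed_splus[OF c A] hom_splus[OF h A] by simp
qed

lemma hom_Fw:
  assumes h: "\<And>x y. x \<in> L \<Longrightarrow> y \<in> L \<Longrightarrow> h (x + y) = h x + h y" and h0: "h 0 = 0"
  and c: "\<And>x y. x \<in> L \<Longrightarrow> y \<in> L \<Longrightarrow> x + y \<in> L" and c0: "0 \<in> L"
  and R: "\<And>j. 1 \<le> j \<Longrightarrow> j \<le> m \<Longrightarrow> R j \<subseteq> L"
  shows "Fw R m d \<subseteq> L \<and> h ` Fw R m d = Fw (\<lambda>j. h ` R j) m d"
  using R
proof (induction m)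
  case 0 thus ?case using h0 c0 by simp
next
  case (Suc m)
  have ih: "Fw R m d \<subseteq> L \<and> h ` Fw R m d = Fw (\<lambda>j. h ` R j) m d" using Suc by simp
  have r: "R (Suc m) \<subseteq> L" using Suc.prems by simp
  note sp = hom_spow[OF h h0 c c0 r, of "d (Suc m)"]
  show ?case using ih sp closed_splus[OF c] hom_splus[OF h] by simp
qed


lemma lat_add: "lattice_pt a \<Longrightarrow> lattice_pt b \<Longrightarrow> lattice_pt (a + b)"
  unfolding lattice_pt_def by simp
lemma lat_0: "lattice_pt 0"
  unfolding lattice_pt_def by simp
lemma lat_inner: "lattice_pt a \<Longrightarrow> lattice_pt b \<Longrightarrow> a \<bullet> b \<in> \<int>"
  unfolding lattice_pt_def inner_vec_def by (auto intro!: Ints_sum Ints_mult simp: inner_real_def)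

lemma pair_add: "lattice_pt w \<Longrightarrow> lattice_pt a \<Longrightarrow> lattice_pt b \<Longrightarrow> pair w (a + b) = pair w a + pair w b"
proof -
  assume w: "lattice_pt w" and a: "lattice_pt a" and b: "lattice_pt b"
  obtain x where x: "w \<bullet> a = of_int x" using lat_inner[OF w a] by (auto elim: Ints_cases)
  obtain y where y: "w \<bullet> b = of_int y" using lat_inner[OF w b] by (auto elim: Ints_cases)
  show ?thesis unfolding pair_def by (simp add: inner_add_right x y)
qed

lemma pair_0: "pair w 0 = 0" unfolding pair_def by simp

lemma lat_sum_list: "(\<forall>u\<in>set us. lattice_pt u) \<Longrightarrow> lattice_pt (sum_list us)"
  by (induction us) (auto intro: lat_add lat_0)

lemma pair_sum_list: "lattice_pt w \<Longrightarrow> (\<forall>u\<in>set us. lattice_pt u) \<Longrightarrow> pair w (sum_list us) = sum_list (map (pair w) us)"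
  by (induction us) (auto simp: pair_0 pair_add lat_sum_list)

lemma tail_add:
  assumes v: "\<And>j. j \<in> {k<..CARD('n)} \<Longrightarrow> lattice_pt (v j)"
  and a: "lattice_pt (a :: real^'n)" and b: "lattice_pt b"
  shows "tail_exp k v (a + b) = tail_exp k v a + tail_exp k v b"
proof -
  have "\<And>j. j \<in> {k<..CARD('n)} \<Longrightarrow> Poly_Mapping.single j (pair (v j) (a + b)) =
     Poly_Mapping.single j (pair (v j) a) + Poly_Mapping.single j (pair (v j) b)"
    using pair_add[OF v a b] by (simp add: single_add)
  hence "(\<Sum>j\<in>{k<..CARD('n)}. Poly_Mapping.single j (pair (v j) (a + b))) =
     (\<Sum>j\<in>{k<..CARD('n)}. Poly_Mapping.single j (pair (v j) a) + Poly_Mapping.single j (pair (v j) b))"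
    by (rule sum.cong[OF refl])
  thus ?thesis unfolding tail_exp_def by (simp add: sum.distrib)
qed

lemma tail_0: "tail_exp k v 0 = 0"
  unfolding tail_exp_def by (simp add: pair_0)

lemma sum_list_filter_split: "sum_list (filter P xs) + sum_list (filter (\<lambda>x. \<not> P x) xs) = sum_list (xs :: 'a::comm_monoid_add list)"
  by (induction xs) (auto simp: add_ac)

lemma int_sum_list_map: "int (sum_list (map f xs)) = sum_list (map (\<lambda>x. int (f x)) xs)"
  by (induction xs) auto

definition cv :: "(nat \<Rightarrow> real^'n) \<Rightarrow> real^'n \<Rightarrow> nat \<Rightarrow> nat" where
  "cv v \<rho> l = nat (pair (v l) \<rho>)"

definition Rstep :: "(nat \<Rightarrow> (real^'n) set) \<Rightarrow> (nat \<Rightarrow> real^'n) \<Rightarrow> (nat \<Rightarrow> (real^'n) set) \<Rightarrow> nat \<Rightarrow> (real^'n) set" where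
  "Rstep E v R i = (\<Union>\<rho>\<in>E i. (\<lambda>y. \<rho> + y) ` Fw R (i - 1) (cv v \<rho>))"

primrec Rs :: "(nat \<Rightarrow> (real^'n) set) \<Rightarrow> (nat \<Rightarrow> real^'n) \<Rightarrow> nat \<Rightarrow> nat \<Rightarrow> (real^'n) set" where
  "Rs E v 0 = (\<lambda>j. {})"
| "Rs E v (Suc i) = (Rs E v i)(Suc i := Rstep E v (Rs E v i) (Suc i))"

definition RR :: "(nat \<Rightarrow> (real^'n) set) \<Rightarrow> (nat \<Rightarrow> real^'n) \<Rightarrow> nat \<Rightarrow> (real^'n) set" where
  "RR E v j = Rs E v j j"

lemma Rs_stable: "j \<le> i \<Longrightarrow> Rs E v i j = RR E v j"
proof (induction i)
  case 0 thus ?case by (simp add: RR_def)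
next
  case (Suc i)
  show ?case
  proof (cases "j = Suc i")
    case True thus ?thesis by (simp add: RR_def)
  next
    case False thus ?thesis using Suc by simp
  qed
qed

lemma RR_eq: "1 \<le> i \<Longrightarrow> RR E v i = Rstep E v (RR E v) i"
proof -
  assume "1 \<le> i"
  then obtain i' where i: "i = Suc i'" by (cases i) auto
  have "RR E v i = Rstep E v (Rs E v i') (Suc i')" by (simp add: RR_def i)
  also have "\<dots> = Rstep E v (RR E v) (Suc i')"
    unfolding Rstep_def by (simp add: Fw_cong[of i' "Rs E v i'" "RR E v"] Rs_stable)
  finally show ?thesis by (simp add: i)
qed

lemma fpre_stable: "j \<le> i \<Longrightarrow> fpre k E v i j = ff k E v j"
proof (induction i)
  case 0 thus ?case by (simp add: ff_def)
next
  case (Suc i)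
  show ?case
  proof (cases "j = Suc i")
    case True thus ?thesis by (simp add: ff_def)
  next
    case False thus ?thesis using Suc by simp
  qed
qed

lemma ff_eq: "ff k E v (Suc i) = fstep k E v (ff k E v) (Suc i)"
proof -
  have "ff k E v (Suc i) = fstep k E v (fpre k E v i) (Suc i)" by (simp add: ff_def)
  also have "\<dots> = fstep k E v (ff k E v) (Suc i)"
    unfolding fstep_def by (intro sum.cong refl arg_cong2[where f="(*)"] prod.cong) (auto simp: fpre_stable)
  finally show ?thesis .
qed



locale amen =
  fixes k :: nat and E :: "nat \<Rightarrow> (real^'n) set" and v :: "nat \<Rightarrow> real^'n"
  assumes latE: "\<And>i \<rho>. 1 \<le> i \<Longrightarrow> i \<le> k+1 \<Longrightarrow> \<rho> \<in> E i \<Longrightarrow> lattice_pt \<rho>"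
  and latv: "\<And>l. 1 \<le> l \<Longrightarrow> l \<le> k \<Longrightarrow> lattice_pt (v l)"
  and am1: "\<And>i \<rho>. 1 \<le> i \<Longrightarrow> i \<le> k \<Longrightarrow> \<rho> \<in> E i \<Longrightarrow> pair (v i) \<rho> = -1"
  and am2: "\<And>i j \<rho>. 1 \<le> i \<Longrightarrow> i \<le> k \<Longrightarrow> i < j \<Longrightarrow> j \<le> k+1 \<Longrightarrow> \<rho> \<in> E j \<Longrightarrow> pair (v i) \<rho> \<ge> 0"
  and am3: "\<And>i j \<rho>. 1 \<le> i \<Longrightarrow> i \<le> k \<Longrightarrow> 1 \<le> j \<Longrightarrow> j < i \<Longrightarrow> \<rho> \<in> E j \<Longrightarrow> pair (v i) \<rho> = 0"
begin

definition Eu :: "nat \<Rightarrow> (real^'n) set" where "Eu m = (\<Union>l\<in>{1..m}. E l)"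

definition Sm :: "nat \<Rightarrow> (nat \<Rightarrow> nat) \<Rightarrow> (real^'n) set" where
  "Sm m d = {sum_list us | us. set us \<subseteq> Eu m \<and> (\<forall>l\<in>{1..m}. pair (v l) (sum_list us) = - int (d l))}"

lemma lat_list: "m \<le> k+1 \<Longrightarrow> set us \<subseteq> Eu m \<Longrightarrow> \<forall>u\<in>set us. lattice_pt u"
  unfolding Eu_def using latE by fastforce

lemma eu_pair_zero:
  assumes l: "1 \<le> l" "l \<le> k" and ml: "m < l" and us: "set us \<subseteq> Eu m"
  shows "pair (v l) (sum_list us) = 0"
proof -
  have lu: "\<forall>u\<in>set us. lattice_pt u" using lat_list[OF _ us] ml l by simp
  have "\<forall>u\<in>set us. pair (v l) u = 0"
  proof
    fix u assume "u \<in> set us"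
    then obtain j where "j \<in> {1..m}" "u \<in> E j" using us unfolding Eu_def by blast
    thus "pair (v l) u = 0" using am3[OF l] ml by auto
  qed
  hence "sum_list (map (pair (v l)) us) = 0" by (induction us) auto
  thus ?thesis using pair_sum_list[OF latv[OF l] lu] by simp
qed

lemma Eu_mono: "m \<le> m' \<Longrightarrow> Eu m \<subseteq> Eu m'"
  unfolding Eu_def by (rule UN_mono) auto

lemma Sm_lat: "m \<le> k+1 \<Longrightarrow> x \<in> Sm m d \<Longrightarrow> lattice_pt x"
  unfolding Sm_def using lat_list lat_sum_list by blast

lemma spow_sum_lists: fixes ts :: "'a::comm_monoid_add list" shows
  "length ys = length ts \<Longrightarrow> (\<forall>i<length ts. ts!i + ys!i \<in> A) \<Longrightarrow> sum_list ts + sum_list ys \<in> spow A (length ts)"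
proof (induction ts arbitrary: ys)
  case Nil thus ?case by simp
next
  case (Cons t ts)
  then obtain y ys' where ys: "ys = y # ys'" by (cases ys) auto
  have h1: "t + y \<in> A" using Cons.prems ys by force
  have h2: "sum_list ts + sum_list ys' \<in> spow A (length ts)"
    using Cons.IH[of ys'] Cons.prems ys by force
  have "sum_list (t # ts) + sum_list ys = (t + y) + (sum_list ts + sum_list ys')" by (simp add: ys add_ac)
  thus ?case using h1 h2 by (auto simp: splus_def)
qed

lemma Fw_decomp: fixes R :: "nat \<Rightarrow> 'a::comm_monoid_add set" shows
  "x \<in> Fw R m (\<lambda>l. d l + sum_list (map (\<lambda>u. c u l) ts)) \<Longrightarrow>
   \<exists>a ys. a \<in> Fw R m d \<and> length ys = length ts \<and> (\<forall>i<length ts. ys!i \<in> Fw R m (c (ts!i))) \<and> x = a + sum_list ys"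
proof (induction ts arbitrary: x)
  case Nil thus ?case by simp
next
  case (Cons t ts)
  have "(\<lambda>l. d l + sum_list (map (\<lambda>u. c u l) (t # ts))) = (\<lambda>l. (d l + sum_list (map (\<lambda>u. c u l) ts)) + c t l)"
    by (auto simp: add_ac)
  hence "x \<in> splus (Fw R m (\<lambda>l. d l + sum_list (map (\<lambda>u. c u l) ts))) (Fw R m (c t))"
    using Cons.prems Fw_add[of R m "\<lambda>l. d l + sum_list (map (\<lambda>u. c u l) ts)" "c t"] by simp
  then obtain x1 y where x1: "x1 \<in> Fw R m (\<lambda>l. d l + sum_list (map (\<lambda>u. c u l) ts))"
      and y: "y \<in> Fw R m (c t)" and x: "x = x1 + y" unfolding splus_def by blast
  obtain a ys where a: "a \<in> Fw R m d" "length ys = length ts" "\<forall>i<length ts. ys!i \<in> Fw R m (c (ts!i))" "x1 = a + sum_list ys"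
    using Cons.IH[OF x1] by blast
  have "\<forall>i<length (t#ts). (y#ys)!i \<in> Fw R m (c ((t#ts)!i))"
    using a(3) y by (auto simp: nth_Cons split: nat.split)
  moreover have "x = a + sum_list (y # ys)" using x a(4) by (simp add: add_ac)
  ultimately show ?case using a(1,2) by (intro exI[of _ a] exI[of _ "y#ys"]) simp
qed


lemma Sm_0: "Sm 0 d = {0}"
  unfolding Sm_def Eu_def by auto

lemma Char: "m \<le> k \<Longrightarrow> Fw (RR E v) m d = Sm m d"
proof (induction m arbitrary: d)
  case 0 thus ?case by (simp add: Sm_0)
next
  case (Suc m)
  have mk: "Suc m \<le> k" using Suc.prems .
  have IH: "\<And>d. Fw (RR E v) m d = Sm m d" using Suc.IH mk by simp
  have lv: "\<And>l. l \<in> {1..Suc m} \<Longrightarrow> lattice_pt (v l)" using latv mk by auto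
  have latU: "\<And>us. set us \<subseteq> Eu (Suc m) \<Longrightarrow> \<forall>u\<in>set us. lattice_pt u" using lat_list[of "Suc m"] mk by simp
  have RRs: "RR E v (Suc m) = (\<Union>\<rho>\<in>E (Suc m). (\<lambda>y. \<rho> + y) ` Fw (RR E v) m (cv v \<rho>))"
    using RR_eq[of "Suc m" E v] by (simp add: Rstep_def)
  have tree: "\<exists>us. set us \<subseteq> Eu (Suc m) \<and> y = sum_list us \<and> (\<forall>l\<in>{1..m}. pair (v l) y = 0) \<and> pair (v (Suc m)) y = -1"
    if y: "y \<in> RR E v (Suc m)" for y
  proof -
    obtain \<rho> z where \<rho>: "\<rho> \<in> E (Suc m)" and z: "z \<in> Sm m (cv v \<rho>)" and yz: "y = \<rho> + z"
      using y RRs IH by auto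
    obtain us0 where us0: "set us0 \<subseteq> Eu m" "\<forall>l\<in>{1..m}. pair (v l) (sum_list us0) = - int (cv v \<rho> l)" "z = sum_list us0"
      using z unfolding Sm_def by blast
    have lr: "lattice_pt \<rho>" using latE[OF _ _ \<rho>] mk by simp
    have lz: "lattice_pt z" using us0 lat_list[of m us0] lat_sum_list mk by simp
    have "set (\<rho> # us0) \<subseteq> Eu (Suc m)" using us0(1) Eu_mono[of m "Suc m"] \<rho> unfolding Eu_def by auto
    moreover have "y = sum_list (\<rho> # us0)" using yz us0(3) by simp
    moreover have "\<forall>l\<in>{1..m}. pair (v l) y = 0"
    proof
      fix l assume l: "l \<in> {1..m}"
      have "pair (v l) \<rho> \<ge> 0" using am2[of l "Suc m" \<rho>] l mk \<rho> by auto
      thus "pair (v l) y = 0" using pair_add[OF lv lr lz, of l] l us0(2,3) yz by (auto simp: cv_def)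
    qed
    moreover have "pair (v (Suc m)) y = -1"
    proof -
      have "pair (v (Suc m)) z = 0" using eu_pair_zero[of "Suc m" m us0] mk us0 by simp
      moreover have "pair (v (Suc m)) \<rho> = -1" using am1[of "Suc m" \<rho>] mk \<rho> by simp
      ultimately show ?thesis using pair_add[OF lv lr lz, of "Suc m"] yz by simp
    qed
    ultimately show ?thesis by blast
  qed
  have spw: "\<exists>us. set us \<subseteq> Eu (Suc m) \<and> b = sum_list us \<and> (\<forall>l\<in>{1..m}. pair (v l) b = 0) \<and> pair (v (Suc m)) b = - int n"
    if "b \<in> spow (RR E v (Suc m)) n" for b n
    using that
  proof (induction n arbitrary: b)
    case 0 thus ?case by (intro exI[of _ "[]"]) (simp add: pair_0)
  next
    case (Suc n)
    obtain y b' where y: "y \<in> RR E v (Suc m)" and b': "b' \<in> spow (RR E v (Suc m)) n" and b: "b = y + b'"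
      using Suc.prems by (auto simp: splus_def)
    obtain us1 where us1: "set us1 \<subseteq> Eu (Suc m)" "y = sum_list us1" "\<forall>l\<in>{1..m}. pair (v l) y = 0" "pair (v (Suc m)) y = -1"
      using tree[OF y] by blast
    obtain us2 where us2: "set us2 \<subseteq> Eu (Suc m)" "b' = sum_list us2" "\<forall>l\<in>{1..m}. pair (v l) b' = 0" "pair (v (Suc m)) b' = - int n"
      using Suc.IH[OF b'] by blast
    have ly: "lattice_pt y" using latU[OF us1(1)] lat_sum_list us1(2) by simp
    have lb: "lattice_pt b'" using latU[OF us2(1)] lat_sum_list us2(2) by simp
    show ?case
    proof (intro exI[of _ "us1 @ us2"] conjI ballI)
      show "set (us1 @ us2) \<subseteq> Eu (Suc m)" using us1(1) us2(1) by simp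
      show "b = sum_list (us1 @ us2)" using b us1(2) us2(2) by simp
      fix l assume l: "l \<in> {1..m}"
      thus "pair (v l) b = 0" using pair_add[OF lv ly lb, of l] us1(3) us2(3) b by simp
    next
      show "pair (v (Suc m)) b = - int (Suc n)" using pair_add[OF lv ly lb, of "Suc m"] us1(4) us2(4) b by simp
    qed
  qed
  show ?case
  proof
    show "Fw (RR E v) (Suc m) d \<subseteq> Sm (Suc m) d"
    proof
      fix x assume "x \<in> Fw (RR E v) (Suc m) d"
      then obtain a b where a: "a \<in> Sm m d" and b: "b \<in> spow (RR E v (Suc m)) (d (Suc m))" and x: "x = a + b"
        using IH by (auto simp: splus_def)
      obtain usa where usa: "set usa \<subseteq> Eu m" "\<forall>l\<in>{1..m}. pair (v l) (sum_list usa) = - int (d l)" "a = sum_list usa"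
        using a unfolding Sm_def by blast
      obtain usb where usb: "set usb \<subseteq> Eu (Suc m)" "b = sum_list usb" "\<forall>l\<in>{1..m}. pair (v l) b = 0" "pair (v (Suc m)) b = - int (d (Suc m))"
        using spw[OF b] by blast
      have usa': "set usa \<subseteq> Eu (Suc m)" using usa(1) Eu_mono[of m "Suc m"] by auto
      have la: "lattice_pt a" using latU[OF usa'] lat_sum_list usa(3) by simp
      have lb: "lattice_pt b" using latU[OF usb(1)] lat_sum_list usb(2) by simp
      have a0: "pair (v (Suc m)) a = 0" using eu_pair_zero[of "Suc m" m usa] mk usa by simp
      have "\<forall>l\<in>{1..Suc m}. pair (v l) x = - int (d l)"
      proof
        fix l assume l: "l \<in> {1..Suc m}"
        show "pair (v l) x = - int (d l)"
        proof (cases "l = Suc m")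
          case True thus ?thesis using pair_add[OF lv la lb, of l] l a0 usb(4) x by simp
        next
          case False hence "l \<in> {1..m}" using l by auto
          thus ?thesis using pair_add[OF lv la lb, of l] l usa(2,3) usb(3) x by simp
        qed
      qed
      moreover have "set (usa @ usb) \<subseteq> Eu (Suc m)" using usa' usb(1) by simp
      moreover have "x = sum_list (usa @ usb)" using x usa(3) usb(2) by simp
      ultimately show "x \<in> Sm (Suc m) d" unfolding Sm_def by blast
    qed
  next
    show "Sm (Suc m) d \<subseteq> Fw (RR E v) (Suc m) d"
    proof
      fix x assume "x \<in> Sm (Suc m) d"
      then obtain us where us: "set us \<subseteq> Eu (Suc m)" "\<forall>l\<in>{1..Suc m}. pair (v l) (sum_list us) = - int (d l)" "x = sum_list us"
        unfolding Sm_def by blast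
      define top where "top = filter (\<lambda>u. u \<in> E (Suc m)) us"
      define rest where "rest = filter (\<lambda>u. u \<notin> E (Suc m)) us"
      have split: "sum_list us = sum_list top + sum_list rest"
        unfolding top_def rest_def using sum_list_filter_split[of "\<lambda>u. u \<in> E (Suc m)" us] by simp
      have rest_sub: "set rest \<subseteq> Eu m"
      proof
        fix u assume "u \<in> set rest"
        hence u: "u \<in> set us" "u \<notin> E (Suc m)" unfolding rest_def by auto
        then obtain j where "j \<in> {1..Suc m}" "u \<in> E j" using us(1) unfolding Eu_def by blast
        moreover have "j \<noteq> Suc m" using u calculation by auto
        ultimately show "u \<in> Eu m" unfolding Eu_def by auto
      qed
      have top_E: "\<forall>u\<in>set top. u \<in> E (Suc m)" unfolding top_def by auto
      have ltop: "\<forall>u\<in>set top. lattice_pt u" using top_E latE[of "Suc m"] mk by simp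
      have lrest: "\<forall>u\<in>set rest. lattice_pt u" using lat_list[OF _ rest_sub] mk by simp
      have lt: "lattice_pt (sum_list top)" using lat_sum_list ltop by blast
      have lr: "lattice_pt (sum_list rest)" using lat_sum_list lrest by blast
      have r0: "pair (v (Suc m)) (sum_list rest) = 0" using eu_pair_zero[OF _ mk _ rest_sub] by simp
      have "sum_list (map (pair (v (Suc m))) top) = - int (length top)"
        using top_E am1[of "Suc m"] mk by (induction top) auto
      hence t0: "pair (v (Suc m)) (sum_list top) = - int (length top)"
        using pair_sum_list[OF lv ltop, of "Suc m"] by simp
      have len: "length top = d (Suc m)"
        using us(2) split pair_add[OF lv lt lr, of "Suc m"] r0 t0 by simp
      define d' where "d' = (\<lambda>l. d l + sum_list (map (\<lambda>u. cv v u l) top))"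
      have "sum_list rest \<in> Sm m d'"
      proof -
        have "\<forall>l\<in>{1..m}. pair (v l) (sum_list rest) = - int (d' l)"
        proof
          fix l assume l: "l \<in> {1..m}"
          have "\<forall>u\<in>set top. pair (v l) u = int (cv v u l)"
            using top_E am2[of l "Suc m"] l mk by (auto simp: cv_def)
          hence "sum_list (map (pair (v l)) top) = sum_list (map (\<lambda>u. int (cv v u l)) top)"
            by (induction top) auto
          hence "pair (v l) (sum_list top) = int (sum_list (map (\<lambda>u. cv v u l) top))"
            using pair_sum_list[OF lv ltop, of l] l int_sum_list_map[of "\<lambda>u. cv v u l" top] by simp
          moreover have "pair (v l) (sum_list us) = - int (d l)" using us(2) l by auto
          ultimately show "pair (v l) (sum_list rest) = - int (d' l)"
            using split pair_add[OF lv lt lr, of l] l by (simp add: d'_def)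
        qed
        thus ?thesis using rest_sub unfolding Sm_def by blast
      qed
      hence "sum_list rest \<in> Fw (RR E v) m (\<lambda>l. d l + sum_list (map (\<lambda>u. cv v u l) top))"
        using IH by (simp add: d'_def)
      then obtain a ys where a: "a \<in> Fw (RR E v) m d" and ys: "length ys = length top"
        "\<forall>i<length top. ys!i \<in> Fw (RR E v) m (cv v (top!i))" and ra: "sum_list rest = a + sum_list ys"
        using Fw_decomp by blast
      have "\<forall>i<length top. top!i + ys!i \<in> RR E v (Suc m)"
      proof (intro allI impI)
        fix i assume i: "i < length top"
        have "top!i \<in> E (Suc m)" using top_E i nth_mem by blast
        moreover have "ys!i \<in> Fw (RR E v) m (cv v (top!i))" using ys(2) i by blast
        ultimately show "top!i + ys!i \<in> RR E v (Suc m)" unfolding RRs by blast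
      qed
      hence "sum_list top + sum_list ys \<in> spow (RR E v (Suc m)) (length top)"
        using spow_sum_lists ys(1) by blast
      moreover have "x = a + (sum_list top + sum_list ys)" using us(3) split ra by (simp add: add_ac)
      ultimately show "x \<in> Fw (RR E v) (Suc m) d" using a len by (auto simp: splus_def)
    qed
  qed
qed

end


definition Pb :: "complex \<Rightarrow> bool" where "Pb z \<longleftrightarrow> Im z = 0 \<and> 0 \<le> Re z"

lemma goodP_Pb: "goodP Pb"
  unfolding goodP_def Pb_def
proof (intro conjI allI impI)
  fix x y :: complex
  assume "Im x = 0 \<and> 0 \<le> Re x" "Im y = 0 \<and> 0 \<le> Re y" "x + y = 0"
  thus "x = 0" by (simp add: complex_eq_iff)
next
  fix x y :: complex
  assume a: "Im x = 0 \<and> 0 \<le> Re x" "Im y = 0 \<and> 0 \<le> Re y" "x \<noteq> 0" "y \<noteq> 0"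
  show "x * y \<noteq> 0" using a by simp
qed simp_all

definition PL :: "'n laurent \<Rightarrow> bool" where "PL = liftP (liftP Pb)"

lemma goodP_C: "goodP (liftP Pb :: 'n coef \<Rightarrow> bool)"
  by (rule lift_good[OF goodP_Pb])

lemma goodP_PL: "goodP (PL :: 'n laurent \<Rightarrow> bool)"
  unfolding PL_def by (rule lift_good[OF goodP_C])

lemma PL_single: "liftP Pb c \<Longrightarrow> PL (Poly_Mapping.single m c)"
  unfolding PL_def liftP_def by (auto simp: lookup_single when_def Pb_def)

lemma single_nz: "b \<noteq> 0 \<Longrightarrow> Poly_Mapping.single a b \<noteq> 0"
  by (metis lookup_single_eq lookup_zero)

lemma avar_props: "PL (avar \<rho>) \<and> Poly_Mapping.keys (avar \<rho>) = {0}"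
  unfolding avar_def
  by (intro conjI PL_single) (auto simp: liftP_def lookup_single when_def Pb_def single_nz)

lemma xmono_props: "PL (xmono m :: 'n laurent) \<and> Poly_Mapping.keys (xmono m :: 'n laurent) = {m}"
  unfolding xmono_def
  by (intro conjI PL_single) (auto simp: liftP_def lookup_one when_def Pb_def)

lemma keys_Tsum:
  fixes Ep :: "(real^'n::finite) set" and g :: "nat \<Rightarrow> 'n laurent" and R :: "nat \<Rightarrow> (real^'n) set"
  assumes finE: "finite Ep" and latE: "\<And>\<rho>. \<rho> \<in> Ep \<Longrightarrow> lattice_pt \<rho>"
  and latv2: "\<And>j. j \<in> {k<..CARD('n)} \<Longrightarrow> lattice_pt (v j)"
  and gP: "\<And>j. 1 \<le> j \<Longrightarrow> j \<le> m \<Longrightarrow> PL (g j)"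
  and gK: "\<And>j. 1 \<le> j \<Longrightarrow> j \<le> m \<Longrightarrow> Poly_Mapping.keys (g j) = tail_exp k v ` R j"
  and RL: "\<And>j. 1 \<le> j \<Longrightarrow> j \<le> m \<Longrightarrow> R j \<subseteq> {x. lattice_pt x}"
  shows "PL (\<Sum>\<rho>\<in>Ep. avar \<rho> * (\<Prod>j\<in>{1..m}. g j ^ nat (pair (v j) \<rho>)) * xmono (tail_exp k v \<rho>)) \<and>
    Poly_Mapping.keys (\<Sum>\<rho>\<in>Ep. avar \<rho> * (\<Prod>j\<in>{1..m}. g j ^ nat (pair (v j) \<rho>)) * xmono (tail_exp k v \<rho>))
     = tail_exp k v ` (\<Union>\<rho>\<in>Ep. (\<lambda>y. \<rho> + y) ` Fw R m (cv v \<rho>))"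
proof -
  let ?T = "\<lambda>\<rho>. avar \<rho> * (\<Prod>j\<in>{1..m}. g j ^ nat (pair (v j) \<rho>)) * xmono (tail_exp k v \<rho>)"
  have hadd: "\<And>x y. x \<in> {x. lattice_pt x} \<Longrightarrow> y \<in> {x. lattice_pt x} \<Longrightarrow> tail_exp k v (x + y) = tail_exp k v x + tail_exp k v y"
    using tail_add[OF latv2] by simp
  have cadd: "\<And>x y. x \<in> {x. lattice_pt x} \<Longrightarrow> y \<in> {x. lattice_pt x} \<Longrightarrow> x + y \<in> {x. lattice_pt x}"
    using lat_add by simp
  have c0: "(0::real^'n) \<in> {x. lattice_pt x}" using lat_0 by simp
  have trm: "PL (?T \<rho>) \<and> Poly_Mapping.keys (?T \<rho>) = tail_exp k v ` ((\<lambda>y. \<rho> + y) ` Fw R m (cv v \<rho>))"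
    if r: "\<rho> \<in> Ep" for \<rho>
  proof -
    have pe: "(\<Prod>j\<in>{1..m}. g j ^ nat (pair (v j) \<rho>)) = (\<Prod>j\<in>{1..m}. g j ^ cv v \<rho> j)"
      by (simp add: cv_def)
    have pp: "PL (\<Prod>j\<in>{1..m}. g j ^ cv v \<rho> j) \<and>
       Poly_Mapping.keys (\<Prod>j\<in>{1..m}. g j ^ cv v \<rho> j) = Fw (\<lambda>j. Poly_Mapping.keys (g j)) m (cv v \<rho>)"
      using keys_prod_Fw[OF goodP_C, of m g "cv v \<rho>"] gP unfolding PL_def by auto
    have fwe: "Fw (\<lambda>j. Poly_Mapping.keys (g j)) m (cv v \<rho>) = Fw (\<lambda>j. tail_exp k v ` R j) m (cv v \<rho>)"
      by (rule Fw_cong) (simp add: gK)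
    have hf: "Fw R m (cv v \<rho>) \<subseteq> {x. lattice_pt x} \<and> tail_exp k v ` Fw R m (cv v \<rho>) = Fw (\<lambda>j. tail_exp k v ` R j) m (cv v \<rho>)"
      by (rule hom_Fw[OF hadd tail_0 cadd c0 RL])
    have P1: "PL (avar \<rho> * (\<Prod>j\<in>{1..m}. g j ^ cv v \<rho> j))"
      using liftP_mult[OF goodP_C] avar_props pp unfolding PL_def by blast
    have a1: "liftP (liftP Pb) (avar \<rho>)" and a2: "Poly_Mapping.keys (avar \<rho>) = {0}"
      using avar_props[of \<rho>] unfolding PL_def by auto
    have pp1: "liftP (liftP Pb) (\<Prod>j\<in>{1..m}. g j ^ cv v \<rho> j)" using pp unfolding PL_def by blast
    have K1: "Poly_Mapping.keys (avar \<rho> * (\<Prod>j\<in>{1..m}. g j ^ cv v \<rho> j)) = tail_exp k v ` Fw R m (cv v \<rho>)"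
      using keys_mult_pos[OF goodP_C a1 pp1] a2 pp fwe hf by (simp add: splus_0)
    have x1: "liftP (liftP Pb) (xmono (tail_exp k v \<rho>) :: 'n laurent)" and x2: "Poly_Mapping.keys (xmono (tail_exp k v \<rho>) :: 'n laurent) = {tail_exp k v \<rho>}"
      using xmono_props[of "tail_exp k v \<rho>"] unfolding PL_def by auto
    have P1': "liftP (liftP Pb) (avar \<rho> * (\<Prod>j\<in>{1..m}. g j ^ cv v \<rho> j))" using P1 unfolding PL_def .
    have P2: "PL (?T \<rho>)" unfolding pe PL_def by (rule liftP_mult[OF goodP_C P1' x1])
    have "Poly_Mapping.keys (?T \<rho>) = splus (tail_exp k v ` Fw R m (cv v \<rho>)) {tail_exp k v \<rho>}"
      unfolding pe using keys_mult_pos[OF goodP_C P1' x1] K1 x2 by simp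
    also have "\<dots> = tail_exp k v ` ((\<lambda>y. \<rho> + y) ` Fw R m (cv v \<rho>))"
    proof -
      have lr: "lattice_pt \<rho>" using latE r by blast
      have "\<And>y. y \<in> Fw R m (cv v \<rho>) \<Longrightarrow> tail_exp k v (\<rho> + y) = tail_exp k v y + tail_exp k v \<rho>"
        using hadd lr hf by (auto simp: add.commute)
      thus ?thesis unfolding splus_def by (auto simp: image_iff)
    qed
    finally show ?thesis using P2 by blast
  qed
  have "PL (sum ?T Ep)"
    using liftP_sum[OF goodP_C, of Ep ?T] trm unfolding PL_def by blast
  moreover have "Poly_Mapping.keys (sum ?T Ep) = (\<Union>\<rho>\<in>Ep. Poly_Mapping.keys (?T \<rho>))"
    using keys_sum_pos[OF goodP_C finE, of ?T] trm unfolding PL_def by blast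
  ultimately show ?thesis using trm by (simp add: image_UN)
qed



locale amen2 = amen k E v for k :: nat and E :: "nat \<Rightarrow> (real^'n::finite) set" and v +
  assumes finE: "\<And>i. 1 \<le> i \<Longrightarrow> i \<le> k+1 \<Longrightarrow> finite (E i)"
  and latv2: "\<And>j. j \<in> {k<..CARD('n)} \<Longrightarrow> lattice_pt (v j)"
begin

lemma RR_lat: "1 \<le> j \<Longrightarrow> j \<le> k \<Longrightarrow> RR E v j \<subseteq> {x. lattice_pt x}"
proof
  fix x assume j: "1 \<le> j" "j \<le> k" and x: "x \<in> RR E v j"
  then obtain \<rho> y where r: "\<rho> \<in> E j" and y: "y \<in> Fw (RR E v) (j - 1) (cv v \<rho>)" and xy: "x = \<rho> + y"
    using RR_eq[OF j(1), of E v] by (auto simp: Rstep_def)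
  have "y \<in> Sm (j - 1) (cv v \<rho>)" using y Char[of "j - 1"] j by simp
  hence "lattice_pt y" using Sm_lat[of "j - 1"] j by simp
  moreover have "lattice_pt \<rho>" using latE[OF j(1) _ r] j by simp
  ultimately show "x \<in> {x. lattice_pt x}" using xy lat_add by simp
qed

lemma ff_keys: "1 \<le> i \<Longrightarrow> i \<le> k \<Longrightarrow> PL (ff k E v i) \<and> Poly_Mapping.keys (ff k E v i) = tail_exp k v ` RR E v i"
proof (induction i rule: less_induct)
  case (less i)
  obtain i' where i: "i = Suc i'" using less.prems by (cases i) auto
  have fe: "ff k E v i = (\<Sum>\<rho>\<in>E i. avar \<rho> * (\<Prod>j\<in>{1..i'}. ff k E v j ^ nat (pair (v j) \<rho>)) * xmono (tail_exp k v \<rho>))"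
    unfolding i ff_eq fstep_def by (simp add: atLeastLessThanSuc_atLeastAtMost)
  have "PL (\<Sum>\<rho>\<in>E i. avar \<rho> * (\<Prod>j\<in>{1..i'}. ff k E v j ^ nat (pair (v j) \<rho>)) * xmono (tail_exp k v \<rho>)) \<and>
    Poly_Mapping.keys (\<Sum>\<rho>\<in>E i. avar \<rho> * (\<Prod>j\<in>{1..i'}. ff k E v j ^ nat (pair (v j) \<rho>)) * xmono (tail_exp k v \<rho>))
     = tail_exp k v ` (\<Union>\<rho>\<in>E i. (\<lambda>y. \<rho> + y) ` Fw (RR E v) i' (cv v \<rho>))"
  proof (rule keys_Tsum)
    show "finite (E i)" using finE less.prems by simp
    show "\<And>\<rho>. \<rho> \<in> E i \<Longrightarrow> lattice_pt \<rho>" using latE less.prems by simp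
    show "\<And>j. j \<in> {k<..CARD('n)} \<Longrightarrow> lattice_pt (v j)" by (rule latv2)
    show "\<And>j. 1 \<le> j \<Longrightarrow> j \<le> i' \<Longrightarrow> PL (ff k E v j)" using less.IH less.prems i by simp
    show "\<And>j. 1 \<le> j \<Longrightarrow> j \<le> i' \<Longrightarrow> Poly_Mapping.keys (ff k E v j) = tail_exp k v ` RR E v j"
      using less.IH less.prems i by simp
    show "\<And>j. 1 \<le> j \<Longrightarrow> j \<le> i' \<Longrightarrow> RR E v j \<subseteq> {x. lattice_pt x}" using RR_lat less.prems i by simp
  qed
  moreover have "(\<Union>\<rho>\<in>E i. (\<lambda>y. \<rho> + y) ` Fw (RR E v) i' (cv v \<rho>)) = RR E v i"
    using RR_eq[of i E v] less.prems i by (simp add: Rstep_def)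
  ultimately show ?case using fe by simp
qed

lemma main: "Poly_Mapping.keys (pullback_w k E v) =
    {tail_exp k v s | s. \<exists>p\<in>E (k+1). \<exists>us. set us \<subseteq> (\<Union>i\<in>{1..k}. E i) \<and>
        s = p + sum_list us \<and> (\<forall>i\<in>{1..k}. pair (v i) s = 0)}"
proof -
  have "PL (pullback_w k E v) \<and> Poly_Mapping.keys (pullback_w k E v)
     = tail_exp k v ` (\<Union>\<rho>\<in>E (k+1). (\<lambda>y. \<rho> + y) ` Fw (RR E v) k (cv v \<rho>))"
    unfolding pullback_w_def
  proof (rule keys_Tsum)
    show "finite (E (k+1))" using finE by simp
    show "\<And>\<rho>. \<rho> \<in> E (k+1) \<Longrightarrow> lattice_pt \<rho>" using latE[of "k+1"] by simp
    show "\<And>j. j \<in> {k<..CARD('n)} \<Longrightarrow> lattice_pt (v j)" by (rule latv2)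
    show "\<And>j. 1 \<le> j \<Longrightarrow> j \<le> k \<Longrightarrow> PL (ff k E v j)" using ff_keys by simp
    show "\<And>j. 1 \<le> j \<Longrightarrow> j \<le> k \<Longrightarrow> Poly_Mapping.keys (ff k E v j) = tail_exp k v ` RR E v j"
      using ff_keys by simp
    show "\<And>j. 1 \<le> j \<Longrightarrow> j \<le> k \<Longrightarrow> RR E v j \<subseteq> {x. lattice_pt x}" using RR_lat by simp
  qed
  hence K: "Poly_Mapping.keys (pullback_w k E v) = tail_exp k v ` (\<Union>\<rho>\<in>E (k+1). (\<lambda>y. \<rho> + y) ` Sm k (cv v \<rho>))"
    using Char[of k] by simp
  have S: "(\<Union>\<rho>\<in>E (k+1). (\<lambda>y. \<rho> + y) ` Sm k (cv v \<rho>)) =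
     {s. \<exists>p\<in>E (k+1). \<exists>us. set us \<subseteq> (\<Union>i\<in>{1..k}. E i) \<and> s = p + sum_list us \<and> (\<forall>i\<in>{1..k}. pair (v i) s = 0)}"
    (is "?L = ?R")
  proof -
    have key: "(\<forall>i\<in>{1..k}. pair (v i) (p + sum_list us) = 0) \<longleftrightarrow>
        (\<forall>l\<in>{1..k}. pair (v l) (sum_list us) = - int (cv v p l))"
      if p: "p \<in> E (k+1)" and us: "set us \<subseteq> Eu k" for p us
    proof -
      have lp: "lattice_pt p" using latE[of "k+1"] p by simp
      have lu: "lattice_pt (sum_list us)" using lat_list[of k us] us lat_sum_list by simp
      have "pair (v l) (p + sum_list us) = 0 \<longleftrightarrow> pair (v l) (sum_list us) = - int (cv v p l)"
        if l: "l \<in> {1..k}" for l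
      proof -
        have "pair (v l) p \<ge> 0" using am2[of l "k+1" p] l p by auto
        moreover have "pair (v l) (p + sum_list us) = pair (v l) p + pair (v l) (sum_list us)"
          using pair_add[OF latv lp lu, of l] l by simp
        ultimately show ?thesis by (auto simp: cv_def)
      qed
      thus ?thesis by blast
    qed
    show ?thesis
    proof
      show "?L \<subseteq> ?R"
      proof
        fix s assume "s \<in> ?L"
        then obtain p us where p: "p \<in> E (k+1)" and us: "set us \<subseteq> Eu k"
          "\<forall>l\<in>{1..k}. pair (v l) (sum_list us) = - int (cv v p l)" and s: "s = p + sum_list us"
          unfolding Sm_def by blast
        show "s \<in> ?R" using key[OF p us(1)] us p s unfolding Eu_def by blast
      qed
      show "?R \<subseteq> ?L"
      proof
        fix s assume "s \<in> ?R"
        then obtain p us where p: "p \<in> E (k+1)" and us: "set us \<subseteq> Eu k"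
          and c: "\<forall>i\<in>{1..k}. pair (v i) (p + sum_list us) = 0" and s: "s = p + sum_list us"
          unfolding Eu_def by blast
        have "sum_list us \<in> Sm k (cv v p)" using key[OF p us] c us unfolding Sm_def by blast
        thus "s \<in> ?L" using p s by blast
      qed
    qed
  qed
  show ?thesis unfolding K S by blast
qed

end



lemma pcone_single: "pcone {\<rho>} = {t *\<^sub>R \<rho> | t. t \<ge> 0}"
  unfolding pcone_def by auto

lemma primitive_pcone_inj:
  assumes a: "primitive a" and b: "primitive b" and e: "pcone {a} = pcone {b}"
  shows "a = b"
proof -
  have "b \<in> pcone {b}" unfolding pcone_single by (auto intro: exI[of _ 1])
  then obtain t where t: "t \<ge> 0" "b = t *\<^sub>R a" using e unfolding pcone_single by auto
  have "a \<in> pcone {a}" unfolding pcone_single by (auto intro: exI[of _ 1])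
  then obtain s where s: "s \<ge> 0" "a = s *\<^sub>R b" using e unfolding pcone_single by auto
  have a0: "a \<noteq> 0" and b0: "b \<noteq> 0" using a b unfolding primitive_def by auto
  have la: "lattice_pt a" and lb: "lattice_pt b" using a b unfolding primitive_def by auto
  have tp: "t > 0" using t b0 by (cases "t = 0") auto
  have "a = (s * t) *\<^sub>R a" using s t by simp
  hence "(s * t - 1) *\<^sub>R a = 0" by (simp add: algebra_simps)
  hence st: "s * t = 1" using a0 by simp
  have "\<not> t < 1"
  proof
    assume "t < 1"
    hence "\<not> lattice_pt (t *\<^sub>R a)" using a tp unfolding primitive_def by blast
    thus False using t lb by simp
  qed
  moreover have "\<not> t > 1"
  proof
    assume t1: "t > 1"
    have "s = 1 / t" using st tp by (simp add: field_simps)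
    hence "s < 1" "s > 0" using t1 by auto
    hence "\<not> lattice_pt (s *\<^sub>R b)" using b unfolding primitive_def by blast
    thus False using s la by simp
  qed
  ultimately have "t = 1" by simp
  thus ?thesis using t by simp
qed

lemma finite_rays: "fan \<Sigma> \<Longrightarrow> finite (rays \<Sigma>)"
proof -
  assume "fan \<Sigma>"
  hence fin: "finite \<Sigma>" unfolding fan_def by simp
  have inj: "inj_on (\<lambda>\<rho>. pcone {\<rho>}) (rays \<Sigma>)"
    unfolding inj_on_def rays_def using primitive_pcone_inj by blast
  have "(\<lambda>\<rho>. pcone {\<rho>}) ` rays \<Sigma> \<subseteq> \<Sigma>" unfolding rays_def by auto
  hence "finite ((\<lambda>\<rho>. pcone {\<rho>}) ` rays \<Sigma>)" using fin finite_subset by blast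
  thus ?thesis using inj finite_image_iff by blast
qed

theorem proposition2p17:
  fixes \<Sigma> :: "(real^'n) set set" and k :: nat
    and E :: "nat \<Rightarrow> (real^'n) set" and v :: "nat \<Rightarrow> real^'n"
  assumes "complete_fan \<Sigma>"
    and "k \<le> CARD('n)"
    and "Qnef_partition \<Sigma> k E"
    and "amenable k E v"
    and "zbasis v"
  shows "Poly_Mapping.keys (pullback_w k E v) =
    {tail_exp k v s | s. \<exists>p\<in>E (k+1). \<exists>us. set us \<subseteq> (\<Union>i\<in>{1..k}. E i) \<and>
        s = p + sum_list us \<and> (\<forall>i\<in>{1..k}. pair (v i) s = 0)}"
proof -
  have fan: "fan \<Sigma>" using assms(1) unfolding complete_fan_def by simp
  have Esub: "E i \<subseteq> rays \<Sigma>" if "1 \<le> i" "i \<le> k+1" for i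
    using assms(3) that unfolding Qnef_partition_def by auto
  have vlat: "lattice_pt (v j)" if "j \<in> {1..CARD('n)}" for j
    using assms(5) that unfolding zbasis_def by blast
  have am: "\<forall>i\<in>{1..k}. lattice_pt (v i) \<and>
        (\<forall>\<rho>\<in>E i. pair (v i) \<rho> = -1) \<and>
        (\<forall>j. i < j \<and> j \<le> k+1 \<longrightarrow> (\<forall>\<rho>\<in>E j. pair (v i) \<rho> \<ge> 0)) \<and>
        (\<forall>j. 1 \<le> j \<and> j < i \<longrightarrow> (\<forall>\<rho>\<in>E j. pair (v i) \<rho> = 0))"
    using assms(4) unfolding amenable_def .
  interpret amen2 k E v
  proof
    show "lattice_pt \<rho>" if "1 \<le> i" "i \<le> k+1" "\<rho> \<in> E i" for i \<rho>
      using Esub[OF that(1,2)] that(3) unfolding rays_def primitive_def by auto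
    show "lattice_pt (v l)" if "1 \<le> l" "l \<le> k" for l using vlat that assms(2) by simp
    show "pair (v i) \<rho> = -1" if "1 \<le> i" "i \<le> k" "\<rho> \<in> E i" for i \<rho> using am that by auto
    show "pair (v i) \<rho> \<ge> 0" if "1 \<le> i" "i \<le> k" "i < j" "j \<le> k+1" "\<rho> \<in> E j" for i j \<rho>
      using am that by auto
    show "pair (v i) \<rho> = 0" if "1 \<le> i" "i \<le> k" "1 \<le> j" "j < i" "\<rho> \<in> E j" for i j \<rho>
      using am that by auto
    show "finite (E i)" if "1 \<le> i" "i \<le> k+1" for i
      using finite_subset[OF Esub[OF that] finite_rays[OF fan]] .
    show "lattice_pt (v j)" if "j \<in> {k<..CARD('n)}" for j using vlat that by simp
  qed
  show ?thesis by (rule main)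
qed


end
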